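(* Let $k \geq \ell \geq 2$ and $n \geq k+\ell$. Let $\mathcal F \subset \binom{[n]}{k}$ and $\mathcal G \subset \binom{[n]}{\ell}$ be non-trivial, shifted and cross-intersecting. Then $$|\mathcal F| + |\mathcal G| \leq \sum_{2 \leq i \leq \ell+1} \binom{\ell+1}{i}\binom{n-\ell-1}{k-i} + \binom{\ell+1}{\ell} =: g(n,k,\ell).$$
   Context: Families are cross-intersecting if every member of one meets every member of the other; a non-empty family is non-trivial if the intersection of all its members is empty. For $r$-sets $A=\{x_1<\dots<x_r\}$, $B=\{y_1<\dots<y_r\}$, $A\prec B$ means $x_i\le y_i$ for all $i$; a family of $r$-sets is shifted (initial) if $A\prec B\in\mathcal F$ implies $A\in\mathcal F$. Binomial coefficients $\binom{a}{b}$ with $b<0$ are $0$. *)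

theory Defs
  imports Main
begin

definition kth :: "nat set \<Rightarrow> nat \<Rightarrow> nat" where
  "kth A i = sorted_list_of_set A ! i"

definition shift_le :: "nat set \<Rightarrow> nat set \<Rightarrow> bool" where
  "shift_le A B \<longleftrightarrow> finite A \<and> finite B \<and> card A = card B \<and>
     (\<forall>i < card A. kth A i \<le> kth B i)"

definition rsets :: "nat \<Rightarrow> nat \<Rightarrow> nat set set" where
  "rsets n r = {A. A \<subseteq> {1..n} \<and> card A = r}"

definition shifted :: "nat \<Rightarrow> nat \<Rightarrow> nat set set \<Rightarrow> bool" where
  "shifted n r F \<longleftrightarrow> F \<subseteq> rsets n r \<and>
     (\<forall>A B. A \<in> rsets n r \<longrightarrow> B \<in> F \<longrightarrow> shift_le A B \<longrightarrow> A \<in> F)"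

definition cross_intersecting :: "'a set set \<Rightarrow> 'a set set \<Rightarrow> bool" where
  "cross_intersecting F G \<longleftrightarrow> (\<forall>A\<in>F. \<forall>B\<in>G. A \<inter> B \<noteq> {})"

definition non_trivial :: "'a set set \<Rightarrow> bool" where
  "non_trivial F \<longleftrightarrow> F \<noteq> {} \<and> \<Inter>F = {}"

definition binom :: "int \<Rightarrow> int \<Rightarrow> int" where
  "binom a b = (if b < 0 \<or> a < 0 then 0 else int (nat a choose nat b))"

definition g_bound :: "nat \<Rightarrow> nat \<Rightarrow> nat \<Rightarrow> int" where
  "g_bound n k l = (\<Sum>i = 2..l+1. binom (int l + 1) (int i) * binom (int n - int l - 1) (int k - int i))
                   + binom (int l + 1) (int l)"

end

theory Submission
  imports Defs
begin


definition cnt :: "nat set \<Rightarrow> nat \<Rightarrow> nat" where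
  "cnt S m = card {x\<in>S. x \<le> m}"

lemma strict_take_less:
  assumes "sorted_wrt (<) (xs::nat list)" "i < length xs"
  shows "{x \<in> set xs. x < xs ! i} = set (take i xs)"
proof
  show "{x \<in> set xs. x < xs ! i} \<subseteq> set (take i xs)"
  proof
    fix x assume "x \<in> {x \<in> set xs. x < xs ! i}"
    then obtain j where j: "j < length xs" "xs ! j = x" "x < xs ! i" by (auto simp: in_set_conv_nth)
    have "j < i"
    proof (rule ccontr)
      assume "\<not> j < i"
      hence "i \<le> j" by simp
      hence "xs ! i \<le> xs ! j" using assms j
        by (metis le_neq_implies_less order_less_imp_le sorted_wrt_nth_less)
      thus False using j by simp
    qed
    thus "x \<in> set (take i xs)" using j by (metis in_set_conv_nth length_take min_less_iff_conj nth_take)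
  qed
next
  show "set (take i xs) \<subseteq> {x \<in> set xs. x < xs ! i}"
  proof
    fix x assume "x \<in> set (take i xs)"
    then obtain j where j: "j < i" "xs ! j = x" using assms(2) by (auto simp: in_set_conv_nth)
    have "xs ! j < xs ! i" using assms j sorted_wrt_nth_less by blast
    thus "x \<in> {x \<in> set xs. x < xs ! i}" using j assms(2) by auto
  qed
qed

lemma kth_props:
  assumes "finite A" "i < card A"
  shows "kth A i \<in> A" "card {x\<in>A. x < kth A i} = i"
proof -
  let ?xs = "sorted_list_of_set A"
  have s: "sorted_wrt (<) ?xs" using assms by (simp add: sorted_list_of_set.strict_sorted_key_list_of_set)
  have len: "length ?xs = card A" by simp
  have st: "set ?xs = A" using assms by simp
  show "kth A i \<in> A" unfolding kth_def using assms len st by (metis nth_mem)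
  have "{x\<in>A. x < kth A i} = set (take i ?xs)" unfolding kth_def
    using strict_take_less[OF s] assms len st by auto
  moreover have "distinct (take i ?xs)" using s by (simp add: strict_sorted_iff)
  ultimately show "card {x\<in>A. x < kth A i} = i" using assms len by (simp add: distinct_card)
qed

lemma shift_le_crit:
  assumes "finite A" "finite B" "card A = card B" "\<And>m. cnt B m \<le> cnt A m"
  shows "shift_le A B"
  unfolding shift_le_def
proof (intro conjI allI impI assms)
  fix i assume i: "i < card A"
  let ?x = "kth A i" and ?y = "kth B i"
  show "?x \<le> ?y"
  proof (rule ccontr)
    assume "\<not> ?x \<le> ?y"
    hence lt: "?y < ?x" by simp
    have yB: "?y \<in> B" and cB: "card {z\<in>B. z < ?y} = i" using kth_props[OF assms(2)] i assms(3) by auto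
    have "insert ?y {z\<in>B. z < ?y} \<subseteq> {z\<in>B. z \<le> ?y}" using yB by auto
    hence "card (insert ?y {z\<in>B. z < ?y}) \<le> cnt B ?y" unfolding cnt_def
      using assms(2) by (intro card_mono) auto
    hence "i + 1 \<le> cnt B ?y" using cB assms(2) by simp
    moreover have "cnt A ?y \<le> card {z\<in>A. z < ?x}" unfolding cnt_def
      using assms(1) lt by (intro card_mono) auto
    moreover have "card {z\<in>A. z < ?x} = i" using kth_props[OF assms(1) i] by simp
    ultimately show False using assms(4)[of ?y] by simp
  qed
qed



lemma cnt_le_card: "finite S \<Longrightarrow> cnt S m \<le> card S"
  unfolding cnt_def by (intro card_mono) auto

lemma cnt_mono_set: "finite T \<Longrightarrow> S \<subseteq> T \<Longrightarrow> cnt S m \<le> cnt T m"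
  unfolding cnt_def by (intro card_mono) auto

lemma smallest_subset:
  assumes "finite C" "l \<le> card C"
  shows "\<exists>T \<subseteq> C. card T = l \<and> (\<forall>m. min l (cnt C m) \<le> cnt T m)"
  using assms(2)
proof (induction l)
  case 0
  then show ?case by auto
next
  case (Suc l)
  then obtain T where T: "T \<subseteq> C" "card T = l" "\<forall>m. min l (cnt C m) \<le> cnt T m" by auto
  have fT: "finite T" using T assms(1) finite_subset by blast
  have "C - T \<noteq> {}"
  proof
    assume "C - T = {}" hence "C \<subseteq> T" by auto
    hence "card C \<le> card T" using fT by (simp add: card_mono)
    thus False using Suc.prems T by simp
  qed
  define x where "x = Min (C - T)"
  have xin: "x \<in> C - T" unfolding x_def using \<open>C - T \<noteq> {}\<close> assms(1) by (intro Min_in) auto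
  have xmin: "\<And>y. y \<in> C - T \<Longrightarrow> x \<le> y" unfolding x_def using assms(1) by auto
  show ?case
  proof (intro exI[of _ "insert x T"] conjI allI)
    show "insert x T \<subseteq> C" using T xin by auto
    show "card (insert x T) = Suc l" using T fT xin by simp
    fix m
    show "min (Suc l) (cnt C m) \<le> cnt (insert x T) m"
    proof (cases "x \<le> m")
      case True
      have "{y \<in> insert x T. y \<le> m} = insert x {y\<in>T. y \<le> m}" using True by auto
      hence "cnt (insert x T) m = Suc (cnt T m)" unfolding cnt_def using fT xin by simp
      then show ?thesis using T(3)[rule_format, of m] by simp
    next
      case False
      have "{y\<in>C. y \<le> m} \<subseteq> {y \<in> insert x T. y \<le> m}"
        using False xmin by force
      hence "cnt C m \<le> cnt (insert x T) m" unfolding cnt_def using fT by (intro card_mono) auto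
      then show ?thesis by simp
    qed
  qed
qed

lemma nontriv_contains:
  assumes sh: "shifted n r X" and nt: "non_trivial X" and rn: "r + 1 \<le> n"
    and S: "S \<subseteq> {1..r+1}" "card S = r"
  shows "S \<in> X"
proof -
  from nt have "\<Inter>X = {}" "X \<noteq> {}" unfolding non_trivial_def by auto
  then obtain X0 where X0: "X0 \<in> X" "1 \<notin> X0" by auto
  have X0r: "X0 \<subseteq> {1..n}" "card X0 = r" using X0 sh unfolding shifted_def rsets_def by auto
  have fX0: "finite X0" using X0r finite_subset by blast
  have Srs: "S \<in> rsets n r" using S rn unfolding rsets_def by auto
  have fS: "finite S" using S finite_subset by blast
  have "shift_le S X0"
  proof (rule shift_le_crit[OF fS fX0])
    show "card S = card X0" using S X0r by simp
    fix m
    have a1: "cnt X0 m \<le> r" using cnt_le_card[OF fX0] X0r by simp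
    have "{x \<in> X0. x \<le> m} \<subseteq> {2..m}"
    proof
      fix x assume xa: "x \<in> {x \<in> X0. x \<le> m}"
      hence "1 \<le> x" "x \<noteq> 1" using X0 X0r by auto
      thus "x \<in> {2..m}" using xa by auto
    qed
    hence a2: "cnt X0 m \<le> m - 1" unfolding cnt_def using card_mono[of "{2..m}"] by fastforce
    have "{1..min m (r+1)} \<subseteq> {x\<in>S. x \<le> m} \<union> ({1..r+1} - S)" by auto
    hence "card {1..min m (r+1)} \<le> card ({x\<in>S. x \<le> m} \<union> ({1..r+1} - S))"
      using fS by (intro card_mono) auto
    also have "\<dots> \<le> card {x\<in>S. x \<le> m} + card ({1..r+1} - S)" by (rule card_Un_le)
    finally have "min m (r+1) \<le> cnt S m + card ({1..r+1} - S)" unfolding cnt_def by simp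
    moreover have "card ({1..r+1} - S) = 1" using S by (simp add: card_Diff_subset finite_subset)
    ultimately have "min m (r+1) \<le> cnt S m + 1" by simp
    thus "cnt X0 m \<le> cnt S m" using a1 a2 by linarith
  qed
  thus ?thesis using sh Srs X0 unfolding shifted_def by blast
qed

lemma two_in:
  assumes sh: "shifted n r X" and nt: "non_trivial X" and rn: "r + 1 \<le> n"
    and Y: "\<And>Z. Z \<in> X \<Longrightarrow> Y \<inter> Z \<noteq> {}"
  shows "2 \<le> card (Y \<inter> {1..r+1})"
proof (rule ccontr)
  assume "\<not> 2 \<le> card (Y \<inter> {1..r+1})"
  hence c: "card (Y \<inter> {1..r+1}) \<le> 1" by simp
  have "card ({1..r+1} - Y) = card ({1..r+1} - (Y \<inter> {1..r+1}))" by (metis Diff_Int2 Int_absorb)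
  also have "\<dots> = (r+1) - card (Y \<inter> {1..r+1})" by (simp add: card_Diff_subset finite_subset)
  finally have "r \<le> card ({1..r+1} - Y)" using c by simp
  then obtain S where S: "S \<subseteq> {1..r+1} - Y" "card S = r" by (meson obtain_subset_with_card_n)
  have "S \<in> X" using nontriv_contains[OF sh nt rn] S by auto
  moreover have "Y \<inter> S = {}" using S by auto
  ultimately show False using Y by blast
qed



lemma cnt_Suc: "cnt S (Suc m) = cnt S m + (if Suc m \<in> S then 1 else 0)"
proof -
  have "{x\<in>S. x \<le> Suc m} = {x\<in>S. x \<le> m} \<union> (if Suc m \<in> S then {Suc m} else {})" by (auto simp: le_Suc_eq)
  moreover have "finite {x\<in>S. x \<le> m}" by simp
  ultimately show ?thesis unfolding cnt_def by auto
qed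

lemma cnt_ge: "S \<subseteq> {1..n} \<Longrightarrow> n \<le> m \<Longrightarrow> cnt S m = card S"
  unfolding cnt_def by (rule arg_cong[where f=card]) auto

lemma cnt_min: "S \<subseteq> {1..n} \<Longrightarrow> cnt S (min m n) = cnt S m"
  unfolding cnt_def by (rule arg_cong[where f=card]) auto

lemma cnt_diff_interval: "S \<subseteq> {1..n} \<Longrightarrow> card ({1..j} - S) = j - cnt S j"
proof -
  assume S: "S \<subseteq> {1..n}"
  have "{1..j} - S = {1..j} - {x\<in>S. x \<le> j}" by auto
  moreover have "{x\<in>S. x \<le> j} \<subseteq> {1..j}" using S by auto
  ultimately show ?thesis unfolding cnt_def by (simp add: card_Diff_subset finite_subset)
qed

lemma discrete_ivt:
  fixes f :: "nat \<Rightarrow> int"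
  assumes step: "\<And>m. \<bar>f (Suc m) - f m\<bar> \<le> 1" and "f 0 \<le> c" "c \<le> f n"
  shows "\<exists>m \<le> n. f m = c"
  using assms(3)
proof (induction n)
  case 0 then show ?case using assms(2) by auto
next
  case (Suc n)
  show ?case
  proof (cases "c \<le> f n")
    case True then show ?thesis using Suc.IH by (meson le_Suc_eq)
  next
    case False
    hence "f (Suc n) = c" using Suc.prems step[of n] by linarith
    then show ?thesis by blast
  qed
qed

definition tt :: "nat set \<Rightarrow> nat \<Rightarrow> int" where
  "tt G m = int m - 2 * int (cnt G m)"

definition ms :: "nat \<Rightarrow> nat \<Rightarrow> nat \<Rightarrow> nat set \<Rightarrow> nat" where
  "ms n k l G = Max {m. m \<le> n \<and> tt G m = int k - int l}"

definition phi :: "nat \<Rightarrow> nat \<Rightarrow> nat \<Rightarrow> nat set \<Rightarrow> nat set" where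
  "phi n k l G = {x\<in>G. ms n k l G < x} \<union> ({1..ms n k l G} - G)"

lemma tt_step: "\<bar>tt G (Suc m) - tt G m\<bar> \<le> 1"
  unfolding tt_def cnt_Suc by auto

locale setting =
  fixes n k l :: nat and G :: "nat set"
  assumes G: "G \<subseteq> {1..n}" "card G = l" and kl: "l \<le> k" "k + l \<le> n"
begin

abbreviation "s \<equiv> ms n k l G"
abbreviation "a \<equiv> cnt G s"
abbreviation "P \<equiv> phi n k l G"

lemma fin: "finite G" using G finite_subset by blast

lemma tt0: "tt G 0 = 0"
proof -
  have "{x\<in>G. x \<le> 0} = {}" using G by auto
  thus ?thesis unfolding tt_def cnt_def by simp
qed

lemma ttn: "tt G n = int n - 2 * int l"
  unfolding tt_def using cnt_ge[OF G(1), of n] G by simp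

lemma set_ne: "{m. m \<le> n \<and> tt G m = int k - int l} \<noteq> {}"
proof -
  have "\<exists>m \<le> n. tt G m = int k - int l"
    by (rule discrete_ivt[where f="tt G", OF tt_step]) (use tt0 ttn kl in auto)
  thus ?thesis by auto
qed

lemma s_le: "s \<le> n" and tts: "tt G s = int k - int l"
proof -
  have "s \<in> {m. m \<le> n \<and> tt G m = int k - int l}"
    unfolding ms_def by (rule Max_in) (use set_ne in auto)
  thus "s \<le> n" "tt G s = int k - int l" by auto
qed

lemma tt_after:
  assumes "s < m" "m \<le> n" shows "tt G m > int k - int l"
proof (rule ccontr)
  assume "\<not> tt G m > int k - int l"
  hence "tt G (m + 0) \<le> int k - int l" by simp
  moreover have "int k - int l \<le> tt G (m + (n - m))" using ttn kl assms by simp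
  ultimately obtain j where j: "j \<le> n - m" "tt G (m + j) = int k - int l"
    using discrete_ivt[of "\<lambda>j. tt G (m + j)" "int k - int l" "n - m"] tt_step
    by (metis add_Suc_right)
  hence "m + j \<in> {m. m \<le> n \<and> tt G m = int k - int l}" using assms by auto
  hence "m + j \<le> s" unfolding ms_def by (intro Max_ge) auto
  thus False using assms by simp
qed

lemma cnt_P:
  "cnt P m = (min m s - cnt G (min m s)) + (if s \<le> m then cnt G m - a else 0)"
proof -
  have e: "{x\<in>P. x \<le> m} = {x\<in>G. s < x \<and> x \<le> m} \<union> ({1..min m s} - G)"
    unfolding phi_def by auto
  have d: "{x\<in>G. s < x \<and> x \<le> m} \<inter> ({1..min m s} - G) = {}" by auto
  have c1: "card ({1..min m s} - G) = min m s - cnt G (min m s)"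
    by (rule cnt_diff_interval[OF G(1)])
  have c2: "card {x\<in>G. s < x \<and> x \<le> m} = (if s \<le> m then cnt G m - a else 0)"
  proof (cases "s \<le> m")
    case True
    have "{x\<in>G. x \<le> m} = {x\<in>G. x \<le> s} \<union> {x\<in>G. s < x \<and> x \<le> m}" using True by auto
    moreover have "{x\<in>G. x \<le> s} \<inter> {x\<in>G. s < x \<and> x \<le> m} = {}" by auto
    ultimately have "cnt G m = a + card {x\<in>G. s < x \<and> x \<le> m}" unfolding cnt_def
      using fin by (simp add: card_Un_disjoint)
    then show ?thesis using True by simp
  next
    case False
    hence "{x\<in>G. s < x \<and> x \<le> m} = {}" by auto
    then show ?thesis using False by simp
  qed
  show ?thesis unfolding cnt_def e
    by (subst card_Un_disjoint) (use d c1 c2 fin in \<open>auto simp: cnt_def\<close>)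
qed

lemma P_sub: "P \<subseteq> {1..n}"
  unfolding phi_def using G s_le by auto

lemma a_le: "a \<le> s"
proof -
  have "{x\<in>G. x \<le> s} \<subseteq> {1..s}" using G by auto
  thus ?thesis unfolding cnt_def by (metis card_atLeastAtMost card_mono diff_Suc_1 finite_atLeastAtMost)
qed

lemma a_le_l: "a \<le> l" using cnt_le_card[OF fin] G by simp

lemma card_P: "card P = k"
proof -
  have "card P = cnt P n" using cnt_ge[OF P_sub, of n] by simp
  also have "\<dots> = (s - a) + (l - a)"
    using cnt_P[of n] s_le cnt_ge[OF G(1), of n] G by (simp add: min_absorb2)
  finally show ?thesis using tts a_le a_le_l unfolding tt_def by linarith
qed

lemma u_at_s: "2 * int (cnt P s) - int s = int k - int l"
  using cnt_P[of s] tts a_le unfolding tt_def by simp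

lemma u_after:
  assumes "s < m" "m \<le> n" shows "2 * int (cnt P m) - int m < int k - int l"
proof -
  have "cnt G s \<le> cnt G m" unfolding cnt_def using assms fin by (intro card_mono) auto
  hence "int (cnt P m) = int s - int a + int (cnt G m) - int a"
    using cnt_P[of m] assms a_le by (simp add: min_absorb2)
  thus ?thesis using tt_after[OF assms] tts unfolding tt_def by linarith
qed

lemma recover: "G = {x\<in>P. s < x} \<union> ({1..s} - P)"
  unfolding phi_def using G by auto

end

lemma phi_inj:
  assumes "setting n k l G1" "setting n k l G2" "phi n k l G1 = phi n k l G2"
  shows "G1 = G2"
proof -
  interpret A1: setting n k l G1 by fact
  interpret A2: setting n k l G2 by fact
  have "ms n k l G1 = ms n k l G2"
  proof (rule ccontr)
    assume "ms n k l G1 \<noteq> ms n k l G2"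
    hence "ms n k l G1 < ms n k l G2 \<or> ms n k l G2 < ms n k l G1" by arith
    thus False
    proof
      assume h: "ms n k l G1 < ms n k l G2"
      from A1.u_after[OF h A2.s_le] A2.u_at_s assms(3) show False by simp
    next
      assume h: "ms n k l G2 < ms n k l G1"
      from A2.u_after[OF h A1.s_le] A1.u_at_s assms(3) show False by simp
    qed
  qed
  thus ?thesis using A1.recover A2.recover assms(3) by simp
qed



lemma cnt_le_self: "S \<subseteq> {1..n} \<Longrightarrow> cnt S j \<le> j"
proof -
  assume "S \<subseteq> {1..n}"
  hence "{x\<in>S. x \<le> j} \<subseteq> {1..j}" by auto
  thus ?thesis unfolding cnt_def by (metis card_atLeastAtMost card_mono diff_Suc_1 finite_atLeastAtMost)
qed

lemma cnt_eq_int: "S \<subseteq> {1..n} \<Longrightarrow> card (S \<inter> {1..j}) = cnt S j"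
  unfolding cnt_def by (rule arg_cong[where f=card]) auto

lemma cnt_mono: "finite S \<Longrightarrow> i \<le> j \<Longrightarrow> cnt S i \<le> cnt S j"
  unfolding cnt_def by (intro card_mono) auto

context setting
begin

lemma window:
  assumes nsub: "\<not> G \<subseteq> {1..l+1}" and two: "2 \<le> card (G \<inter> {1..k+1})"
  shows "2 \<le> card (P \<inter> {1..l+1})"
proof (cases "l + 1 \<le> s")
  case True
  from nsub obtain y where y: "y \<in> G" "y \<notin> {1..l+1}" by (meson subsetI)
  have "1 \<le> y" using G y(1) by auto
  hence "l + 1 < y" using y(2) by simp
  hence "y \<notin> {x\<in>G. x \<le> l+1}" by simp
  hence "{x\<in>G. x \<le> l+1} \<subset> G" using y(1) by blast
  hence "cnt G (l+1) < l" unfolding cnt_def using fin G by (metis psubset_card_mono)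
  moreover have "card ({1..l+1} - G) = (l+1) - cnt G (l+1)" by (rule cnt_diff_interval[OF G(1)])
  moreover have "{1..l+1} - G \<subseteq> P \<inter> {1..l+1}" unfolding phi_def using True by auto
  hence "card ({1..l+1} - G) \<le> card (P \<inter> {1..l+1})" by (intro card_mono) auto
  ultimately show ?thesis by linarith
next
  case False
  have c: "card (P \<inter> {1..l+1}) = cnt P (l+1)" by (rule cnt_eq_int[OF P_sub])
  have "cnt P (l+1) = (s - a) + (cnt G (l+1) - a)" using cnt_P[of "l+1"] False by simp
  moreover have "a \<le> cnt G (l+1)" using cnt_mono[OF fin] False by simp
  moreover have "cnt G (k+1) \<le> cnt G (l+1) + (k - l)"
  proof -
    have "{x\<in>G. x \<le> k+1} \<subseteq> {x\<in>G. x \<le> l+1} \<union> {l+2..k+1}" by auto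
    hence "cnt G (k+1) \<le> card ({x\<in>G. x \<le> l+1} \<union> {l+2..k+1})" unfolding cnt_def
      by (intro card_mono) auto
    also have "\<dots> \<le> cnt G (l+1) + card {l+2..k+1}" unfolding cnt_def by (rule card_Un_le)
    finally show ?thesis by simp
  qed
  moreover have "card (G \<inter> {1..k+1}) = cnt G (k+1)" by (rule cnt_eq_int[OF G(1)])
  ultimately show ?thesis using c two tts a_le kl unfolding tt_def by linarith
qed

lemma disjoint_witness:
  "\<exists>T \<in> rsets n l. shift_le T G \<and> T \<inter> P = {}"
proof -
  define C where "C = {1..n} - P"
  have fC: "finite C" unfolding C_def by simp
  have cC: "card C = n - k" unfolding C_def using card_P P_sub by (simp add: card_Diff_subset finite_subset)
  have "l \<le> card C" using cC kl by simp
  then obtain T where T: "T \<subseteq> C" "card T = l" "\<forall>m. min l (cnt C m) \<le> cnt T m"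
    using smallest_subset[OF fC] by blast
  have Csub: "C \<subseteq> {1..n}" unfolding C_def by auto
  have fT: "finite T" using T fC finite_subset by blast
  have key: "cnt G m \<le> cnt C m" for m
  proof -
    define m' where "m' = min m n"
    have m'n: "m' \<le> n" unfolding m'_def by simp
    have e1: "cnt G m = cnt G m'" unfolding m'_def using cnt_min[OF G(1)] by simp
    have e2: "cnt C m = cnt C m'" unfolding m'_def using cnt_min[OF Csub] by simp
    have "{x\<in>C. x \<le> m'} = {1..m'} - P" unfolding C_def using m'n by auto
    hence e3: "cnt C m' = m' - cnt P m'" unfolding cnt_def
      using cnt_diff_interval[OF P_sub, of m'] by (simp add: cnt_def)
    have pl: "cnt P m' \<le> m'" by (rule cnt_le_self[OF P_sub])
    have gl: "cnt G m' \<le> m'" by (rule cnt_le_self[OF G(1)])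
    show ?thesis
    proof (cases "m' < s")
      case True
      hence "cnt P m' = m' - cnt G m'" using cnt_P[of m'] by simp
      then show ?thesis using e1 e2 e3 gl by simp
    next
      case False
      hence cp: "cnt P m' = (s - a) + (cnt G m' - a)" using cnt_P[of m'] by simp
      have am: "a \<le> cnt G m'" using cnt_mono[OF fin] False by simp
      have "int m' - 2 * int (cnt G m') \<ge> int s - 2 * int a"
      proof (cases "s = m'")
        case True then show ?thesis by simp
      next
        case False
        hence "s < m'" using \<open>\<not> m' < s\<close> by simp
        then show ?thesis using tt_after[OF _ m'n] tts unfolding tt_def by fastforce
      qed
      then show ?thesis using e1 e2 e3 cp pl am a_le by linarith
    qed
  qed
  have sl: "shift_le T G"
  proof (rule shift_le_crit[OF fT fin])
    show "card T = card G" using T G by simp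
    fix m
    have "cnt G m \<le> l" using cnt_le_card[OF fin] G by simp
    thus "cnt G m \<le> cnt T m" using key[of m] T(3) by (metis min.bounded_iff order_trans)
  qed
  moreover have "T \<in> rsets n l" unfolding rsets_def using T Csub by auto
  moreover have "T \<inter> P = {}" using T unfolding C_def by auto
  ultimately show ?thesis by blast
qed

end


lemma card_split:
  assumes U: "finite U" and W: "W \<subseteq> U" and ik: "i \<le> k"
  shows "card {F. F \<subseteq> U \<and> card F = k \<and> card (F \<inter> W) = i}
         = (card W choose i) * (card (U - W) choose (k - i))"
proof -
  have fW: "finite W" using U W finite_subset by blast
  let ?L = "{F. F \<subseteq> U \<and> card F = k \<and> card (F \<inter> W) = i}"
  let ?R = "{T. T \<subseteq> W \<and> card T = i} \<times> {R. R \<subseteq> U - W \<and> card R = k - i}"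
  have "bij_betw (\<lambda>F. (F \<inter> W, F - W)) ?L ?R"
  proof (rule bij_betw_byWitness[where f'="\<lambda>(T,R). T \<union> R"])
    show "\<forall>a\<in>?L. (case (a \<inter> W, a - W) of (T, R) \<Rightarrow> T \<union> R) = a" by auto
    show "\<forall>a'\<in>?R. (\<lambda>F. (F \<inter> W, F - W)) (case a' of (T, R) \<Rightarrow> T \<union> R) = a'" by auto
    show "(\<lambda>F. (F \<inter> W, F - W)) ` ?L \<subseteq> ?R"
    proof
      fix p assume "p \<in> (\<lambda>F. (F \<inter> W, F - W)) ` ?L"
      then obtain F where F: "F \<subseteq> U" "card F = k" "card (F \<inter> W) = i" and p: "p = (F \<inter> W, F - W)" by auto
      have fF: "finite F" using F U finite_subset by blast
      have "card (F - W) = card F - card (F \<inter> W)" using fF by (metis card_Diff_subset_Int finite_Int Diff_Int2 Int_absorb Int_commute)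
      thus "p \<in> ?R" using F p by auto
    qed
    show "(\<lambda>(T, R). T \<union> R) ` ?R \<subseteq> ?L"
    proof
      fix F assume "F \<in> (\<lambda>(T, R). T \<union> R) ` ?R"
      then obtain T R where T: "T \<subseteq> W" "card T = i" and R: "R \<subseteq> U - W" "card R = k - i" and F: "F = T \<union> R" by auto
      have fT: "finite T" using T fW finite_subset by blast
      have fR: "finite R" using R U finite_subset by blast
      have "T \<inter> R = {}" using T R by auto
      hence "card F = k" using F fT fR T R ik by (simp add: card_Un_disjoint)
      moreover have "F \<inter> W = T" using F T R by auto
      ultimately show "F \<in> ?L" using F T R W by auto
    qed
  qed
  hence "card ?L = card ?R" by (rule bij_betw_same_card)
  also have "\<dots> = (card W choose i) * (card (U - W) choose (k - i))"
    using U fW by (simp add: card_cartesian_product n_subsets)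
  finally show ?thesis .
qed

theorem theorem3p3:
  fixes n k l :: nat and F G :: "nat set set"
  assumes "k \<ge> l" and "l \<ge> 2" and "n \<ge> k + l"
    and "F \<subseteq> rsets n k" and "G \<subseteq> rsets n l"
    and "non_trivial F" and "non_trivial G"
    and "shifted n k F" and "shifted n l G"
    and "cross_intersecting F G"
  shows "int (card F) + int (card G) \<le> g_bound n k l"
proof -
  note kl = assms(1) assms(2) assms(3)
  define W where "W = {1..l+1}"
  define A where "A = {F. F \<subseteq> {1..n} \<and> card F = k \<and> 2 \<le> card (F \<inter> W)}"
  have FA: "2 \<le> card (X \<inter> {1..l+1})" if "X \<in> F" for X
  proof (rule two_in[OF assms(9) assms(7)])
    show "l + 1 \<le> n" using kl by simp
    fix Z assume "Z \<in> G" thus "X \<inter> Z \<noteq> {}" using assms(10) that unfolding cross_intersecting_def by blast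
  qed
  have GA: "2 \<le> card (X \<inter> {1..k+1})" if "X \<in> G" for X
  proof (rule two_in[OF assms(8) assms(6)])
    show "k + 1 \<le> n" using kl by simp
    fix Z assume "Z \<in> F" thus "X \<inter> Z \<noteq> {}" using assms(10) that unfolding cross_intersecting_def by blast
  qed
  have finA: "finite A" unfolding A_def by (rule finite_subset[of _ "Pow {1..n}"]) auto
  have FsubA: "F \<subseteq> A" using assms(4) FA unfolding A_def W_def rsets_def by auto
  define G2 where "G2 = {X\<in>G. \<not> X \<subseteq> W}"
  define G1 where "G1 = {X\<in>G. X \<subseteq> W}"
  have sett: "setting n k l X" if "X \<in> G" for X
    using that assms(5) kl unfolding setting_def rsets_def by auto
  have img: "phi n k l ` G2 \<subseteq> A - F"
  proof
    fix Y assume "Y \<in> phi n k l ` G2"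
    then obtain X where X: "X \<in> G" "\<not> X \<subseteq> W" and Y: "Y = phi n k l X" unfolding G2_def by auto
    interpret S: setting n k l X using sett[OF X(1)] .
    have "Y \<in> A" unfolding A_def W_def Y
      using S.P_sub S.card_P S.window[OF X(2)[unfolded W_def] GA[OF X(1)]] by auto
    moreover have "Y \<notin> F"
    proof
      assume YF: "Y \<in> F"
      obtain T where T: "T \<in> rsets n l" "shift_le T X" "T \<inter> Y = {}" using S.disjoint_witness Y by auto
      have "T \<in> G" using assms(9) T X unfolding shifted_def by blast
      thus False using assms(10) YF T unfolding cross_intersecting_def by blast
    qed
    ultimately show "Y \<in> A - F" by blast
  qed
  have inj: "inj_on (phi n k l) G2"
    unfolding inj_on_def G2_def using phi_inj sett by blast
  have finF: "finite F" using FsubA finA finite_subset by blast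
  have finG2: "finite G2" using inj img finA by (metis finite_Diff finite_imageD finite_subset)
  have "card F + card G2 = card (F \<union> phi n k l ` G2)"
    using img finF finG2 inj by (subst card_Un_disjoint) (auto simp: card_image)
  also have "\<dots> \<le> card A" using img FsubA finA by (intro card_mono) auto
  finally have c1: "card F + card G2 \<le> card A" .
  have "G1 \<subseteq> {S. S \<subseteq> W \<and> card S = l}" unfolding G1_def using assms(5) unfolding rsets_def by auto
  hence "card G1 \<le> card {S. S \<subseteq> W \<and> card S = l}" by (intro card_mono) (auto simp: W_def)
  also have "\<dots> = l + 1" unfolding W_def by (simp add: n_subsets)
  finally have c2: "card G1 \<le> l + 1" .
  have finG: "finite G" using assms(5) unfolding rsets_def by (rule finite_subset) (rule finite_subset[of _ "Pow {1..n}"], auto)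
  have "card G = card G1 + card G2" unfolding G1_def G2_def using finG
    by (subst card_Un_disjoint[symmetric]) (auto intro: arg_cong[where f=card])
  hence total: "card F + card G \<le> card A + (l + 1)" using c1 c2 by simp
  define Ai where "Ai i = {F. F \<subseteq> {1..n} \<and> card F = k \<and> card (F \<inter> W) = i}" for i
  have AU: "A = (\<Union>i\<in>{2..l+1}. Ai i)"
  proof -
    have "card (X \<inter> W) \<le> l + 1" for X unfolding W_def
      by (metis card_atLeastAtMost diff_Suc_1 card_mono finite_atLeastAtMost inf_le2)
    thus ?thesis unfolding A_def Ai_def by fastforce
  qed
  have cA: "card A = (\<Sum>i\<in>{2..l+1}. card (Ai i))"
    unfolding AU by (rule card_UN_disjoint) (auto simp: Ai_def intro: finite_subset[of _ "Pow {1..n}"])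
  have cAi: "int (card (Ai i)) = binom (int l + 1) (int i) * binom (int n - int l - 1) (int k - int i)"
    if "i \<in> {2..l+1}" for i
  proof (cases "i \<le> k")
    case True
    have "card (Ai i) = (card W choose i) * (card ({1..n} - W) choose (k - i))"
      unfolding Ai_def by (rule card_split) (use True kl in \<open>auto simp: W_def\<close>)
    also have "card ({1..n} - W) = n - l - 1" unfolding W_def using kl by (simp add: card_Diff_subset)
    finally have h: "card (Ai i) = (Suc l choose i) * ((n - l - 1) choose (k - i))" by (simp add: W_def)
    have e1: "nat (int l + 1) = Suc l" by simp
    have e2: "nat (int n - int l - 1) = n - l - 1" using kl by simp
    have e3: "nat (int k - int i) = k - i" using True by simp
    show ?thesis using True kl h unfolding binom_def e1 e2 e3 by simp
  next
    case False
    have "Ai i = {}"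
    proof -
      have "card (X \<inter> W) \<le> card X" if "X \<subseteq> {1..n}" for X
        using that by (intro card_mono) (auto intro: finite_subset)
      thus ?thesis unfolding Ai_def using False by fastforce
    qed
    then show ?thesis using False unfolding binom_def by simp
  qed
  have "int (card A) = (\<Sum>i\<in>{2..l+1}. binom (int l + 1) (int i) * binom (int n - int l - 1) (int k - int i))"
    unfolding cA of_nat_sum using cAi by (rule sum.cong[OF refl])
  moreover have "binom (int l + 1) (int l) = int l + 1"
  proof -
    have e1: "nat (int l + 1) = Suc l" by simp
    show ?thesis unfolding binom_def e1 by (simp add: binomial_Suc_n)
  qed
  ultimately show ?thesis using total unfolding g_bound_def by linarith
qed


end
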